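(* Let $D,p\ge1$ be integers, let $r_1,\dots,r_p,s_1,\dots,s_p,t_1,\dots,t_p\ge0$ be integers, and let $0=d_0<d_1<\cdots<d_p=D$ be integers. Put $A_j=d_j-d_{j-1}$ for $j=1,\dots,p$. For every complex $z$ with $|z|>1$, $$\int_{[0,1]^D}\prod_{j=1}^p\frac{\prod_{\ell=d_{j-1}+1}^{d_j}x_\ell^{r_j}(1-x_\ell)^{s_j}}{(z-x_1\cdots x_{d_j})^{t_j+1}}\,\mathrm{d}x_1\cdots\mathrm{d}x_D = z^{-(t_1+\cdots+t_p+p-1)}\prod_{j=1}^p\frac{s_j!^{A_j}}{t_j!}\sum_{k_1\ge\cdots\ge k_p\ge1}z^{-k_1}\prod_{j=1}^p\frac{(k_j-k_{j+1}+1)_{t_j}}{(k_j+r_j)_{s_j+1}^{A_j}},$$ where $k_{p+1}=1$. The series on the right has depth $p$ and weight $D$.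
   Context: $(\alpha)_m=\alpha(\alpha+1)\cdots(\alpha+m-1)$ is the Pochhammer symbol, with $(\alpha)_0=1$. *)

theory Defs
  imports "HOL-Analysis.Analysis"
begin

definition desc_tuples :: "nat \<Rightarrow> (nat \<Rightarrow> nat) set" where
  "desc_tuples p = {k. (\<forall>j. j \<notin> {1..p} \<longrightarrow> k j = 0) \<and> (\<forall>j\<in>{1..p}. 1 \<le> k j)
                      \<and> (\<forall>j\<in>{1..<p}. k (Suc j) \<le> k j)}"

definition knext :: "nat \<Rightarrow> (nat \<Rightarrow> nat) \<Rightarrow> nat \<Rightarrow> nat" where
  "knext p k j = (if j = p then 1 else k (Suc j))"

end

theory Submission
  imports Defs
begin

definition cfr :: "nat \<Rightarrow> nat \<Rightarrow> real" where
  "cfr t n = pochhammer (real (n+1)) t / fact t"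

lemma cfr_pos: "cfr t n > 0"
  unfolding cfr_def by (intro divide_pos_pos pochhammer_pos) auto

lemma cfr_0 [simp]: "cfr 0 n = 1"
  by (simp add: cfr_def)

lemma cfr_hockey: "(\<Sum>i\<le>n. cfr t i) = cfr (Suc t) n"
proof (induction n)
  case 0
  have "cfr u 0 = 1" for u by (simp add: cfr_def pochhammer_fact[symmetric])
  then show ?case by simp
next
  case (Suc n)
  have e: "pochhammer (real n + 2) (Suc t) - pochhammer (real n + 1) (Suc t)
      = (real t + 1) * pochhammer (real n + 2) t"
  proof -
    have "pochhammer (real n + 1) (Suc t) = (real n + 1) * pochhammer (real n + 2) t"
      by (subst pochhammer_rec) (simp add: add.assoc)
    moreover have "pochhammer (real n + 2) (Suc t) = pochhammer (real n + 2) t * (real n + 2 + real t)"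
      by (rule pochhammer_Suc)
    ultimately show ?thesis by (simp add: algebra_simps)
  qed
  have "cfr (Suc t) (Suc n) = cfr (Suc t) n + cfr t (Suc n)"
  proof -
    have a: "real (Suc n + 1) = real n + 2" "real (n+1) = real n + 1" by simp_all
    have f: "(fact (Suc t) :: real) = (real t + 1) * fact t" by simp
    have "cfr (Suc t) (Suc n) = pochhammer (real n + 2) (Suc t) / fact (Suc t)"
      unfolding cfr_def a by simp
    also have "\<dots> = (pochhammer (real n + 1) (Suc t) + (real t + 1) * pochhammer (real n + 2) t) / fact (Suc t)"
      using e by (simp add: algebra_simps)
    also have "\<dots> = pochhammer (real n + 1) (Suc t) / fact (Suc t) + pochhammer (real n + 2) t / fact t"
      unfolding f by (simp add: add_divide_distrib)
    also have "\<dots> = cfr (Suc t) n + cfr t (Suc n)"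
      unfolding cfr_def a by simp
    finally show ?thesis .
  qed
  then show ?case using Suc by simp
qed

lemma negbin:
  fixes w :: complex
  assumes "norm w < 1"
  shows "summable (\<lambda>n. norm (of_real (cfr t n) * w ^ n)) \<and>
         (\<lambda>n. of_real (cfr t n) * w ^ n) sums (1 / (1 - w) ^ (t+1))"
proof (induction t)
  case 0
  have "(\<lambda>n. w ^ n) sums (1 / (1 - w))" using geometric_sums[OF assms] by simp
  moreover have "summable (\<lambda>n. norm w ^ n)" using assms by (simp add: summable_geometric)
  ultimately show ?case by (simp add: norm_power)
next
  case (Suc t)
  have ga: "summable (\<lambda>n. norm (w ^ n))" using assms by (simp add: summable_geometric norm_power)
  have eq: "(\<Sum>i\<le>n. of_real (cfr t i) * w ^ i * w ^ (n - i)) = of_real (cfr (Suc t) n) * w ^ n" for n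
  proof -
    have "(\<Sum>i\<le>n. of_real (cfr t i) * w ^ i * w ^ (n - i)) = (\<Sum>i\<le>n. of_real (cfr t i) * w ^ n)"
      by (intro sum.cong refl) (simp add: mult.assoc power_add[symmetric])
    also have "\<dots> = of_real (cfr (Suc t) n) * w ^ n"
      by (simp add: sum_distrib_right[symmetric] cfr_hockey of_real_sum[symmetric])
    finally show ?thesis .
  qed
  have eqn: "(\<Sum>i\<le>n. norm (of_real (cfr t i) * w ^ i) * norm (w ^ (n - i))) = norm (of_real (cfr (Suc t) n) * w ^ n)" for n
  proof -
    have "(\<Sum>i\<le>n. norm (of_real (cfr t i) * w ^ i) * norm (w ^ (n - i))) = (\<Sum>i\<le>n. norm (of_real (cfr t i) * w ^ i * w ^ (n - i)))"
      by (simp add: norm_mult mult.assoc)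
    also have "\<dots> = (\<Sum>i\<le>n. cfr t i * norm w ^ n)"
      using cfr_pos[of t] by (intro sum.cong refl) (simp add: abs_of_pos norm_mult norm_power mult.assoc power_add[symmetric])
    also have "\<dots> = norm (of_real (cfr (Suc t) n) * w ^ n)"
      using cfr_pos[of "Suc t" n] by (simp add: sum_distrib_right[symmetric] cfr_hockey norm_mult norm_power)
    finally show ?thesis .
  qed
  have s1: "summable (\<lambda>n. norm (norm (of_real (cfr t n) * w ^ n)))" using Suc by simp
  have s2: "summable (\<lambda>n. norm (norm (w ^ n)))" using ga by simp
  have "summable (\<lambda>n. \<Sum>i\<le>n. norm (of_real (cfr t i) * w ^ i) * norm (w ^ (n - i)))"
    by (rule summable_Cauchy_product[OF s1 s2])
  hence A: "summable (\<lambda>n. norm (of_real (cfr (Suc t) n) * w ^ n))" using eqn by simp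
  have "(\<lambda>n. \<Sum>i\<le>n. of_real (cfr t i) * w ^ i * w ^ (n - i)) sums
         ((\<Sum>n. of_real (cfr t n) * w ^ n) * (\<Sum>n. w ^ n))"
    by (rule Cauchy_product_sums) (use Suc ga in auto)
  moreover have "(\<Sum>n. of_real (cfr t n) * w ^ n) = 1 / (1 - w) ^ (t+1)"
    using Suc sums_unique by metis
  moreover have "(\<Sum>n. w ^ n) = 1 / (1 - w)"
    using geometric_sums[OF assms] sums_unique by metis
  ultimately have "(\<lambda>n. of_real (cfr (Suc t) n) * w ^ n) sums (1 / (1 - w) ^ (t+1) * (1 / (1 - w)))"
    using eq by simp
  then show ?case using A by (simp add: field_simps)
qed

lemma d_strict:
  fixes i j :: nat
  assumes "\<forall>j\<in>{1..p}. d (j - 1) < (d j :: nat)"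
  shows "i < j \<Longrightarrow> j \<le> p \<Longrightarrow> d i < d j"
proof (induction j)
  case 0 then show ?case by simp
next
  case (Suc j)
  have "d j < d (Suc j)" using assms Suc.prems by (metis atLeastAtMost_iff diff_Suc_1 le_add1 plus_1_eq_Suc)
  show ?case
  proof (cases "i < j")
    case True then show ?thesis using Suc \<open>d j < d (Suc j)\<close> by auto
  next
    case False then have "i = j" using Suc.prems by auto
    then show ?thesis using \<open>d j < d (Suc j)\<close> by simp
  qed
qed

lemma d_mono:
  fixes i j :: nat
  assumes "\<forall>j\<in>{1..p}. d (j - 1) < (d j :: nat)"
  shows "i \<le> j \<Longrightarrow> j \<le> p \<Longrightarrow> d i \<le> d j"
  using d_strict[OF assms, of i j] by (cases "i = j") (auto simp: less_imp_le)

definition blk :: "(nat \<Rightarrow> nat) \<Rightarrow> nat \<Rightarrow> nat" where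
  "blk d l = (LEAST j. l \<le> d j)"

context
  fixes d :: "nat \<Rightarrow> nat" and p :: nat
  assumes dinc: "\<forall>j\<in>{1..p}. d (j - 1) < d j" and d0: "d 0 = 0"
begin

lemma blk_le: "l \<le> d p \<Longrightarrow> l \<le> d (blk d l)"
  unfolding blk_def by (rule LeastI)

lemma blk_le_p: "l \<le> d p \<Longrightarrow> blk d l \<le> p"
  unfolding blk_def by (rule Least_le)

lemma blk_ge1: "l \<in> {1..d p} \<Longrightarrow> 1 \<le> blk d l"
  using blk_le[of l] d0 by (cases "blk d l") auto

lemma blk_iff: "l \<in> {1..d p} \<Longrightarrow> j \<le> p \<Longrightarrow> (l \<le> d j \<longleftrightarrow> blk d l \<le> j)"
proof
  assume "l \<in> {1..d p}" "l \<le> d j" then show "blk d l \<le> j" unfolding blk_def by (metis Least_le)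
next
  assume "l \<in> {1..d p}" "j \<le> p" "blk d l \<le> j"
  then show "l \<le> d j" using blk_le[of l] d_mono[OF dinc, of "blk d l" j] by auto
qed

lemma block_eq: "j \<in> {1..p} \<Longrightarrow> {d (j - 1) + 1..d j} = {l \<in> {1..d p}. blk d l = j}"
proof (intro set_eqI iffI)
  fix l assume j: "j \<in> {1..p}" and l: "l \<in> {d (j - 1) + 1..d j}"
  have "d j \<le> d p" using j d_mono[OF dinc, of j p] by auto
  hence l1: "l \<in> {1..d p}" using l by auto
  have "blk d l \<le> j" using blk_iff[OF l1, of j] j l by auto
  moreover have "j - 1 \<le> p" using j by auto
  hence "\<not> blk d l \<le> j - 1" using blk_iff[OF l1, of "j - 1"] j l by auto
  ultimately show "l \<in> {l \<in> {1..d p}. blk d l = j}" using l1 by auto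
next
  fix l assume j: "j \<in> {1..p}" and l: "l \<in> {l \<in> {1..d p}. blk d l = j}"
  hence l1: "l \<in> {1..d p}" and b: "blk d l = j" by auto
  have "l \<le> d j" using blk_iff[OF l1, of j] j b by auto
  moreover have "j - 1 \<le> p" using j by auto
  hence "\<not> l \<le> d (j - 1)" using blk_iff[OF l1, of "j - 1"] j b by auto
  ultimately show "l \<in> {d (j - 1) + 1..d j}" by auto
qed

lemma prod_blocks:
  "(\<Prod>j\<in>{1..p}. \<Prod>l\<in>{d (j - 1) + 1..d j}. h j l) = (\<Prod>l\<in>{1..d p}. h (blk d l) l)"
proof -
  have "(\<Prod>j\<in>{1..p}. \<Prod>l\<in>{d (j - 1) + 1..d j}. h j l) = (\<Prod>j\<in>{1..p}. \<Prod>l\<in>{l \<in> {1..d p}. blk d l = j}. h j l)"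
    by (intro prod.cong refl, subst block_eq) auto
  also have "\<dots> = (\<Prod>l\<in>{1..d p}. \<Prod>j\<in>{j\<in>{1..p}. blk d l = j}. h j l)"
    by (rule prod.swap_restrict) auto
  also have "\<dots> = (\<Prod>l\<in>{1..d p}. h (blk d l) l)"
  proof (intro prod.cong refl)
    fix l assume l: "l \<in> {1..d p}"
    have "{j\<in>{1..p}. blk d l = j} = {blk d l}" using blk_ge1[OF l] blk_le_p[of l] l by auto
    then show "(\<Prod>j\<in>{j\<in>{1..p}. blk d l = j}. h j l) = h (blk d l) l" by simp
  qed
  finally show ?thesis .
qed

lemma prod_blocks_const:
  "(\<Prod>l\<in>{1..d p}. c (blk d l)) = (\<Prod>j\<in>{1..p}. c j ^ (d j - d (j - 1)))"
  using prod_blocks[of "\<lambda>j l. c j"] by simp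

lemma prod_powers:
  fixes x :: "nat \<Rightarrow> 'a :: comm_semiring_1"
  shows "(\<Prod>j\<in>{1..p}. (\<Prod>l\<in>{1..d j}. x l) ^ n j) = (\<Prod>l\<in>{1..d p}. x l ^ (\<Sum>j\<in>{blk d l..p}. n j))"
proof -
  have "(\<Prod>j\<in>{1..p}. (\<Prod>l\<in>{1..d j}. x l) ^ n j) = (\<Prod>j\<in>{1..p}. \<Prod>l\<in>{l\<in>{1..d p}. blk d l \<le> j}. x l ^ n j)"
  proof (intro prod.cong refl)
    fix j assume j: "j \<in> {1..p}"
    have "{1..d j} = {l\<in>{1..d p}. blk d l \<le> j}"
      using blk_iff[of _ j] j d_mono[OF dinc, of j p] by (auto simp del: atLeastAtMost_iff) (auto, meson atLeastAtMost_iff le_trans)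
    then show "(\<Prod>l\<in>{1..d j}. x l) ^ n j = (\<Prod>l\<in>{l\<in>{1..d p}. blk d l \<le> j}. x l ^ n j)"
      by (simp add: prod_power_distrib)
  qed
  also have "\<dots> = (\<Prod>l\<in>{1..d p}. \<Prod>j\<in>{j\<in>{1..p}. blk d l \<le> j}. x l ^ n j)"
    by (rule prod.swap_restrict) auto
  also have "\<dots> = (\<Prod>l\<in>{1..d p}. x l ^ (\<Sum>j\<in>{blk d l..p}. n j))"
  proof (intro prod.cong refl)
    fix l assume l: "l \<in> {1..d p}"
    have "{j\<in>{1..p}. blk d l \<le> j} = {blk d l..p}" using blk_ge1[OF l] by auto
    then show "(\<Prod>j\<in>{j\<in>{1..p}. blk d l \<le> j}. x l ^ n j) = x l ^ (\<Sum>j\<in>{blk d l..p}. n j)"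
      by (simp add: power_sum)
  qed
  finally show ?thesis .
qed

end

definition phi :: "nat \<Rightarrow> (nat \<Rightarrow> nat) \<Rightarrow> nat \<Rightarrow> nat" where
  "phi p n = (\<lambda>j. if j \<in> {1..p} then 1 + (\<Sum>i\<in>{j..p}. n i) else 0)"

definition psi :: "nat \<Rightarrow> (nat \<Rightarrow> nat) \<Rightarrow> nat \<Rightarrow> nat" where
  "psi p k = (\<lambda>j. if j \<in> {1..p} then k j - knext p k j else undefined)"

lemma phi_in: "phi p n \<in> desc_tuples p"
  unfolding desc_tuples_def phi_def
  by (auto intro!: sum_mono2)

lemma psi_in: "psi p k \<in> PiE {1..p} (\<lambda>_. UNIV)"
  unfolding psi_def by auto

lemma phi_diff: "j \<in> {1..p} \<Longrightarrow> phi p n j - knext p (phi p n) j = n j"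
proof -
  assume j: "j \<in> {1..p}"
  show ?thesis
  proof (cases "j = p")
    case True then show ?thesis using j by (simp add: phi_def knext_def)
  next
    case False
    then have "sum n {j..p} = n j + sum n {Suc j..p}" using j by (intro sum.atLeast_Suc_atMost) auto
    then show ?thesis using j False by (simp add: phi_def knext_def)
  qed
qed

lemma psi_phi: "n \<in> PiE {1..p} (\<lambda>_. UNIV) \<Longrightarrow> psi p (phi p n) = n"
  by (rule ext) (auto simp: psi_def phi_diff PiE_def extensional_def)

lemma desc_telescope:
  assumes k: "k \<in> desc_tuples p" and j: "1 \<le> j" "j \<le> p"
  shows "(\<Sum>i\<in>{j..p}. k i - knext p k i) + 1 = k j"
  using j(2)
proof (induction j rule: inc_induct)
  case base
  have "1 \<le> k p" using k j by (auto simp: desc_tuples_def)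
  then show ?case by (simp add: knext_def)
next
  case (step m)
  have m1: "1 \<le> m" using j step by auto
  have le: "k (Suc m) \<le> k m" using k m1 step(2) by (auto simp: desc_tuples_def)
  have ge: "1 \<le> k (Suc m)" using k m1 step(2) by (auto simp: desc_tuples_def)
  have "sum (\<lambda>i. k i - knext p k i) {m..p} = (k m - knext p k m) + sum (\<lambda>i. k i - knext p k i) {Suc m..p}"
    using step by (intro sum.atLeast_Suc_atMost) auto
  then show ?case using step le ge by (simp add: knext_def)
qed

lemma phi_psi: "k \<in> desc_tuples p \<Longrightarrow> phi p (psi p k) = k"
proof (rule ext)
  fix j assume k: "k \<in> desc_tuples p"
  show "phi p (psi p k) j = k j"
  proof (cases "j \<in> {1..p}")
    case True
    have "(\<Sum>i\<in>{j..p}. psi p k i) = (\<Sum>i\<in>{j..p}. k i - knext p k i)"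
      using True by (intro sum.cong refl) (auto simp: psi_def)
    then show ?thesis using True desc_telescope[OF k, of j] by (simp add: phi_def)
  next
    case False then show ?thesis using k by (simp add: phi_def desc_tuples_def)
  qed
qed

lemma phi_1: "1 \<le> p \<Longrightarrow> phi p n 1 = 1 + (\<Sum>i\<in>{1..p}. n i)"
  by (simp add: phi_def)

lemma bij_phi: "bij_betw (phi p) (PiE {1..p} (\<lambda>_. UNIV)) (desc_tuples p)"
  by (rule bij_betwI[where g = "psi p"]) (use phi_in psi_in psi_phi phi_psi in blast)+

lemma countable_desc: "countable (desc_tuples p)"
proof -
  have "desc_tuples p = phi p ` PiE {1..p} (\<lambda>_. UNIV)"
    using bij_phi[of p] by (simp add: bij_betw_def)
  then show ?thesis by (auto intro: countable_PiE)
qed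

lemma infinite_desc: "1 \<le> p \<Longrightarrow> infinite (desc_tuples p)"
proof -
  assume p: "1 \<le> p"
  define kk where "kk m = (\<lambda>j::nat. if j \<in> {1..p} then Suc m else 0)" for m
  have "inj kk"
  proof (rule injI)
    fix a b assume "kk a = kk b"
    then have "kk a 1 = kk b 1" by simp
    then show "a = b" using p by (simp add: kk_def)
  qed
  moreover have "range kk \<subseteq> desc_tuples p" by (auto simp: kk_def desc_tuples_def)
  ultimately show ?thesis using range_inj_infinite infinite_super by blast
qed

abbreviation U :: "real measure" where "U \<equiv> restrict_space lborel {0..1::real}"

lemma space_U: "space U = {0..1}"
  by (simp add: space_restrict_space)

lemma finite_U: "finite_measure U"
  by (rule finite_measureI) (simp add: space_restrict_space emeasure_restrict_space)

lemma meas_poly: "(\<lambda>x::real. x ^ a * (1 - x) ^ s) \<in> borel_measurable U"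
  by (intro measurable_restrict_space1) measurable

lemma integrable_poly: "integrable U (\<lambda>x::real. x ^ a * (1 - x) ^ s)"
proof (rule finite_measure.integrable_const_bound[OF finite_U, where B=1])
  show "AE x in U. norm (x ^ a * (1 - x) ^ s) \<le> 1"
  proof (rule AE_I2)
    fix x assume "x \<in> space U"
    then have x: "0 \<le> x" "x \<le> 1" by (auto simp: space_U)
    have "x ^ a \<le> 1" "(1 - x) ^ s \<le> 1" using x by (auto intro: power_le_one)
    moreover have "0 \<le> x ^ a" "0 \<le> (1 - x) ^ s" using x by auto
    ultimately show "norm (x ^ a * (1 - x) ^ s) \<le> 1"
      by (simp add: abs_mult mult_le_one)
  qed
qed (rule meas_poly)

lemma integral_mono_base: "integral\<^sup>L U (\<lambda>x::real. x ^ a) = 1 / real (a + 1)"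
proof -
  have "integral\<^sup>L U (\<lambda>x::real. x ^ a) = integral\<^sup>L lborel (\<lambda>x. indicator {0..1} x *\<^sub>R x ^ a)"
    by (subst integral_restrict_space) auto
  also have "\<dots> = (\<integral>x. x ^ a * indicator {0..1::real} x \<partial>lborel)"
    by (simp add: mult.commute)
  also have "\<dots> = 1 / real (a + 1)" by (subst integral_power) auto
  finally show ?thesis .
qed

lemma beta_nat: "integral\<^sup>L U (\<lambda>x::real. x ^ a * (1 - x) ^ s) = fact a * fact s / fact (a + s + 1)"
proof (induction s arbitrary: a)
  case 0
  have "(fact (a + 0 + 1) :: real) = real (a + 1) * fact a" by simp
  then show ?case using integral_mono_base[of a] by simp
next
  case (Suc s)
  have "(\<lambda>x::real. x ^ a * (1 - x) ^ Suc s) = (\<lambda>x. x ^ a * (1 - x) ^ s - x ^ Suc a * (1 - x) ^ s)"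
    by (auto simp: fun_eq_iff algebra_simps)
  hence eq: "integral\<^sup>L U (\<lambda>x::real. x ^ a * (1 - x) ^ Suc s)
      = integral\<^sup>L U (\<lambda>x. x ^ a * (1 - x) ^ s) - integral\<^sup>L U (\<lambda>x. x ^ Suc a * (1 - x) ^ s)"
    by (simp only:) (rule Bochner_Integration.integral_diff[OF integrable_poly integrable_poly])
  also have "\<dots> = fact a * fact s / fact (a + s + 1) - fact (Suc a) * fact s / fact (Suc a + s + 1)"
    using Suc.IH[of a] Suc.IH[of "Suc a"] by (simp only:)
  also have "\<dots> = fact a * fact (Suc s) / fact (a + Suc s + 1)"
  proof -
    have alg: "fa*fs/F - ((A+1)*fa)*fs/((A+S+2)*F) = fa*((S+1)*fs)/((A+S+2)*F)"
      if "F > 0" "A \<ge> 0" "S \<ge> 0" for F fa fs A S :: real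
    proof -
      have n: "A + S + 2 \<noteq> 0" "F \<noteq> 0" using that by auto
      have "fa*fs/F = ((A+S+2)*fa*fs)/((A+S+2)*F)" using n by simp
      then have "fa*fs/F - ((A+1)*fa)*fs/((A+S+2)*F) = ((A+S+2)*fa*fs - (A+1)*fa*fs)/((A+S+2)*F)"
        by (simp add: diff_divide_distrib)
      also have "(A+S+2)*fa*fs - (A+1)*fa*fs = fa*((S+1)*fs)" by (simp add: algebra_simps)
      finally show ?thesis .
    qed
    have f1: "(fact (a + s + 2) :: real) = (real a + real s + 2) * fact (a + s + 1)"
      by (simp add: add_ac)
    have "fact (Suc a + s + 1) = (fact (a + s + 2) :: real)" "fact (a + Suc s + 1) = (fact (a + s + 2) :: real)"
      by (simp_all add: add_ac)
    moreover have "(fact (Suc a) :: real) = (real a + 1) * fact a" "(fact (Suc s) :: real) = (real s + 1) * fact s"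
      by simp_all
    ultimately show ?thesis unfolding f1 by (simp only:) (rule alg, auto)
  qed
  finally show ?case .
qed

lemma fact_poch: "(fact a * fact s / fact (a + s + 1) :: real) = fact s / pochhammer (real (a + 1)) (s + 1)"
proof -
  have "(fact (a + (s + 1)) :: real) = fact a * pochhammer (real a + 1) (s + 1)"
    unfolding pochhammer_fact using pochhammer_product'[of "1::real" a "s+1"] by (simp add: add_ac)
  moreover have "pochhammer (real a + 1) (s + 1) > 0" by (intro pochhammer_pos) auto
  ultimately show ?thesis by (simp add: add_ac field_simps)
qed

lemma prod_PiE_has_sum:
  fixes f :: "nat \<Rightarrow> nat \<Rightarrow> 'c::{real_normed_field,banach,second_countable_topology}"
  assumes fin: "finite A" and hs: "\<And>j. j\<in>A \<Longrightarrow> (f j has_sum S j) UNIV"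
    and ab: "\<And>j. j\<in>A \<Longrightarrow> (\<lambda>n. norm (f j n)) summable_on UNIV"
  shows "((\<lambda>g. \<Prod>j\<in>A. f j (g j)) has_sum (\<Prod>j\<in>A. S j)) (PiE A (\<lambda>_. UNIV))"
    and "(\<lambda>g. norm (\<Prod>j\<in>A. f j (g j))) summable_on PiE A (\<lambda>_. UNIV)"
proof -
  have a: "Infinite_Set_Sum.abs_summable_on (f j) UNIV" if "j \<in> A" for j
    using ab[OF that] by (rule abs_summable_equivalent[THEN iffD1])
  have "Infinite_Set_Sum.abs_summable_on (\<lambda>g. \<Prod>j\<in>A. f j (g j)) (PiE A (\<lambda>_. UNIV))"
    by (rule abs_summable_on_prod_PiE[OF fin]) (auto intro: a)
  then show nb: "(\<lambda>g. norm (\<Prod>j\<in>A. f j (g j))) summable_on PiE A (\<lambda>_. UNIV)"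
    by (rule abs_summable_equivalent[THEN iffD2])
  have "infsum (\<lambda>g. \<Prod>j\<in>A. f j (g j)) (PiE A (\<lambda>_. UNIV)) = (\<Prod>j\<in>A. infsum (f j) UNIV)"
    by (rule infsum_prod_PiE_abs[OF fin]) (use ab in auto)
  also have "\<dots> = (\<Prod>j\<in>A. S j)"
    using hs by (intro prod.cong refl infsumI) auto
  finally have "infsum (\<lambda>g. \<Prod>j\<in>A. f j (g j)) (PiE A (\<lambda>_. UNIV)) = (\<Prod>j\<in>A. S j)" .
  moreover have "(\<lambda>g. \<Prod>j\<in>A. f j (g j)) summable_on PiE A (\<lambda>_. UNIV)"
    by (rule abs_summable_summable[OF nb])
  ultimately show "((\<lambda>g. \<Prod>j\<in>A. f j (g j)) has_sum (\<Prod>j\<in>A. S j)) (PiE A (\<lambda>_. UNIV))"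
    using has_sum_infsum by fastforce
qed

lemma negbin_has_sum:
  fixes w :: complex
  assumes "norm w < 1"
  shows "((\<lambda>n. of_real (cfr t n) * w ^ n) has_sum (1 / (1 - w) ^ (t+1))) UNIV"
    and "(\<lambda>n. norm (of_real (cfr t n) * w ^ n)) summable_on UNIV"
  using negbin[OF assms, of t] norm_summable_imp_has_sum summable_on_UNIV_nonneg_real_iff
  by auto

lemma negbin_real_summable:
  fixes q :: real
  assumes "0 \<le> q" "q < 1"
  shows "(\<lambda>n. cfr t n * q ^ n) summable_on UNIV"
proof -
  have "(\<lambda>n. norm (of_real (cfr t n) * complex_of_real q ^ n)) summable_on UNIV"
    using negbin_has_sum(2)[of "of_real q" t] assms by simp
  moreover have "norm (of_real (cfr t n) * complex_of_real q ^ n) = cfr t n * q ^ n" for n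
    using cfr_pos[of t n] assms by (simp add: norm_mult norm_power)
  ultimately show ?thesis by simp
qed

definition Tm :: "nat \<Rightarrow> (nat \<Rightarrow> nat) \<Rightarrow> (nat \<Rightarrow> nat) \<Rightarrow> (nat \<Rightarrow> nat) \<Rightarrow> (nat \<Rightarrow> nat) \<Rightarrow> complex \<Rightarrow> (nat \<Rightarrow> nat) \<Rightarrow> complex" where
  "Tm p r s t d z k = inverse z ^ k 1 *
            (\<Prod>j\<in>{1..p}. pochhammer (of_nat (k j - knext p k j + 1)) (t j)
               / pochhammer (of_nat (k j + r j)) (s j + 1) ^ (d j - d (j - 1)))"

lemma div_le_self_real: "0 \<le> (a::real) \<Longrightarrow> 1 \<le> b \<Longrightarrow> a / b \<le> a"
proof -
  assume a: "0 \<le> a" and b: "1 \<le> b"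
  have "a * 1 \<le> a * b" using a b by (intro mult_left_mono) auto
  then show ?thesis using b by (simp add: divide_le_eq)
qed

lemma norm_poch_nat: "norm (pochhammer (of_nat m) n :: complex) = pochhammer (real m) n"
  by (simp only: pochhammer_of_nat norm_of_nat)

lemma norm_poch_ge1: "1 \<le> m \<Longrightarrow> 1 \<le> norm (pochhammer (of_nat m) n :: complex)"
proof -
  assume m: "1 \<le> m"
  have "0 < pochhammer m n" using m by (intro pochhammer_pos) auto
  then show ?thesis by (simp only: pochhammer_of_nat norm_of_nat)
qed

lemma Tm_summable:
  assumes p: "1 \<le> p" and z: "norm z > 1"
  shows "(\<lambda>k. norm (Tm p r s t d z k)) summable_on desc_tuples p"
proof -
  define q where "q = norm (inverse z)"
  have q: "0 \<le> q" "q < 1" using z by (auto simp: q_def norm_inverse inverse_less_1_iff)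
  define f where "f j m = fact (t j) * cfr (t j) m * q ^ m" for j m
  have fnn: "0 \<le> f j m" for j m using cfr_pos[of "t j" m] q by (simp add: f_def)
  have fs: "f j summable_on UNIV" for j
    unfolding f_def mult.assoc by (intro summable_on_cmult_right negbin_real_summable q)
  have "(\<lambda>g. norm (\<Prod>j\<in>{1..p}. f j (g j))) summable_on PiE {1..p} (\<lambda>_. UNIV)"
    by (rule prod_PiE_has_sum(2)[where S = "\<lambda>j. infsum (f j) UNIV"]) (use fs fnn in auto)
  moreover have "norm (\<Prod>j\<in>{1..p}. f j (g j)) = (\<Prod>j\<in>{1..p}. f j (g j))" for g
    using fnn by (simp add: prod_nonneg)
  ultimately have "(\<lambda>g. \<Prod>j\<in>{1..p}. f j (g j)) summable_on PiE {1..p} (\<lambda>_. UNIV)" by simp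
  hence maj: "(\<lambda>g. q * (\<Prod>j\<in>{1..p}. f j (g j))) summable_on PiE {1..p} (\<lambda>_. UNIV)"
    by (rule summable_on_cmult_right)
  have bound: "norm (Tm p r s t d z (phi p n)) \<le> q * (\<Prod>j\<in>{1..p}. f j (n j))"
    if n: "n \<in> PiE {1..p} (\<lambda>_. UNIV)" for n
  proof -
    let ?k = "phi p n"
    have X: "norm (pochhammer (of_nat (?k j - knext p ?k j + 1)) (t j)
               / pochhammer (of_nat (?k j + r j)) (s j + 1) ^ (d j - d (j - 1)) :: complex)
             \<le> fact (t j) * cfr (t j) (n j)" if j: "j \<in> {1..p}" for j
    proof -
      have k1: "1 \<le> ?k j" using j by (simp add: phi_def)
      have "norm (pochhammer (of_nat (?k j - knext p ?k j + 1)) (t j) :: complex) = fact (t j) * cfr (t j) (n j)"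
        using j by (simp only: phi_diff norm_poch_nat cfr_def) simp
      moreover have "1 \<le> norm (pochhammer (of_nat (?k j + r j)) (s j + 1) :: complex)"
        using k1 by (intro norm_poch_ge1) auto
      moreover have "0 \<le> fact (t j) * cfr (t j) (n j)" using cfr_pos[of "t j" "n j"] by simp
      ultimately show ?thesis
        unfolding norm_divide norm_power by (metis div_le_self_real one_le_power)
    qed
    have "norm (Tm p r s t d z ?k) = q ^ ?k 1 * (\<Prod>j\<in>{1..p}. norm (pochhammer (of_nat (?k j - knext p ?k j + 1)) (t j)
               / pochhammer (of_nat (?k j + r j)) (s j + 1) ^ (d j - d (j - 1)) :: complex))"
      by (simp add: Tm_def norm_mult norm_power q_def prod_norm)
    also have "\<dots> \<le> q ^ ?k 1 * (\<Prod>j\<in>{1..p}. fact (t j) * cfr (t j) (n j))"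
      using X q by (intro mult_left_mono prod_mono) auto
    also have "q ^ ?k 1 = q * (\<Prod>j\<in>{1..p}. q ^ n j)"
      unfolding phi_1[OF p] power_add power_sum by simp
    also have "q * (\<Prod>j\<in>{1..p}. q ^ n j) * (\<Prod>j\<in>{1..p}. fact (t j) * cfr (t j) (n j)) = q * (\<Prod>j\<in>{1..p}. f j (n j))"
      by (simp add: f_def prod.distrib mult_ac)
    finally show ?thesis .
  qed
  have "(\<lambda>n. norm (Tm p r s t d z (phi p n))) summable_on PiE {1..p} (\<lambda>_. UNIV)"
    by (rule summable_on_comparison_test[OF maj]) (use bound in auto)
  then show ?thesis
    using summable_on_reindex_bij_betw[OF bij_phi, of "\<lambda>k. norm (Tm p r s t d z k)" p] by simp
qed

lemma psf_U: "product_sigma_finite (\<lambda>_::nat. U)"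
  unfolding product_sigma_finite_def using finite_U by (simp add: finite_measure_def)

lemma of_real_poch: "complex_of_real (pochhammer (real m) n) = pochhammer (of_nat m) n"
  by (simp only: pochhammer_of_nat of_real_of_nat_eq)

context
  fixes D p :: nat and r s t d :: "nat \<Rightarrow> nat" and z :: complex
  assumes D1: "D \<ge> 1" and p1: "p \<ge> 1" and d0: "d 0 = 0"
    and dinc: "\<forall>j\<in>{1..p}. d (j - 1) < d j" and dp: "d p = D" and z1: "norm z > 1"
begin

definition "Ck k = inverse z ^ (k 1 + (sum t {1..p} + p - 1)) *
   (\<Prod>j\<in>{1..p}. pochhammer (of_nat (k j - knext p k j + 1)) (t j) / fact (t j))"
definition "ex k l = r (blk d l) + k (blk d l) - 1"
definition "G k x = Ck k * (\<Prod>l\<in>{1..D}. complex_of_real (x l ^ ex k l * (1 - x l) ^ s (blk d l)))"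
definition "Kc = inverse z ^ (sum t {1..p} + p - 1) * (\<Prod>j\<in>{1..p}. fact (s j) ^ (d j - d (j - 1)) / fact (t j))"

lemma blk_in: "l \<in> {1..D} \<Longrightarrow> blk d l \<in> {1..p}"
  using blk_ge1[OF dinc d0, of l] blk_le_p[OF dinc d0, of l] dp by auto

lemma int_G:
  assumes k: "k \<in> desc_tuples p"
  shows "integrable (PiM {1..D} (\<lambda>_. U)) (G k)"
    and "integral\<^sup>L (PiM {1..D} (\<lambda>_. U)) (G k) = Kc * Tm p r s t d z k"
proof -
  interpret product_sigma_finite "\<lambda>_::nat. U" by (rule psf_U)
  define f where "f l y = complex_of_real (y ^ ex k l * (1 - y) ^ s (blk d l))" for l y
  have fi: "integrable U (f l)" for l unfolding f_def by (intro integrable_of_real integrable_poly)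
  have Gf: "G k = (\<lambda>x. Ck k * (\<Prod>l\<in>{1..D}. f l (x l)))"
    by (simp add: G_def f_def fun_eq_iff)
  show "integrable (PiM {1..D} (\<lambda>_. U)) (G k)"
    unfolding Gf by (intro integrable_mult_right product_integrable_prod fi) auto
  define c where "c j = complex_of_real (fact (s j) / pochhammer (real (k j + r j)) (s j + 1))" for j
  have "integral\<^sup>L (PiM {1..D} (\<lambda>_. U)) (G k) = Ck k * (\<Prod>l\<in>{1..D}. integral\<^sup>L U (f l))"
    unfolding Gf by (simp add: product_integral_prod fi)
  also have "(\<Prod>l\<in>{1..D}. integral\<^sup>L U (f l)) = (\<Prod>l\<in>{1..D}. c (blk d l))"
  proof (intro prod.cong refl)
    fix l assume l: "l \<in> {1..D}"
    have "1 \<le> k (blk d l)" using k blk_in[OF l] by (auto simp: desc_tuples_def)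
    hence e: "ex k l + 1 = k (blk d l) + r (blk d l)" by (simp add: ex_def)
    have "integral\<^sup>L U (f l) = complex_of_real (fact (ex k l) * fact (s (blk d l)) / fact (ex k l + s (blk d l) + 1))"
    proof -
      have "f l = (\<lambda>y. complex_of_real (y ^ ex k l * (1 - y) ^ s (blk d l)))" by (simp add: f_def fun_eq_iff)
      then show ?thesis by (simp only: integral_complex_of_real beta_nat)
    qed
    also have "\<dots> = c (blk d l)"
      unfolding fact_poch c_def e ..
    finally show "integral\<^sup>L U (f l) = c (blk d l)" .
  qed
  also have "\<dots> = (\<Prod>j\<in>{1..p}. c j ^ (d j - d (j - 1)))"
    using prod_blocks_const[OF dinc d0, of c] dp by simp
  also have "Ck k * \<dots> = Kc * Tm p r s t d z k"
  proof -
    have cj: "c j = fact (s j) / pochhammer (of_nat (k j + r j)) (s j + 1)" for j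
    proof -
      have "complex_of_real (pochhammer (real (k j + r j)) (s j + 1)) = pochhammer (of_nat (k j + r j)) (s j + 1)"
        by (simp only: pochhammer_of_nat of_real_of_nat_eq)
      then show ?thesis by (simp add: c_def)
    qed
    show ?thesis
      unfolding Ck_def Kc_def Tm_def cj
      by (simp add: power_add prod.distrib[symmetric] power_divide mult_ac)
  qed
  finally show "integral\<^sup>L (PiM {1..D} (\<lambda>_. U)) (G k) = Kc * Tm p r s t d z k" .
qed

definition "Fi x = (\<Prod>j\<in>{1..p}.
               (\<Prod>l\<in>{d (j - 1) + 1..d j}. of_real (x l ^ r j * (1 - x l) ^ s j))
               / (z - of_real (\<Prod>l\<in>{1..d j}. x l)) ^ (t j + 1))"

lemma dj_le: "j \<in> {1..p} \<Longrightarrow> d j \<le> D"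
  using d_mono[OF dinc, of j p] dp by auto

lemma pw:
  assumes x: "x \<in> space (PiM {1..D} (\<lambda>_. U))"
  shows "((\<lambda>k. G k x) has_sum Fi x) (desc_tuples p)"
proof -
  have xl: "0 \<le> x l \<and> x l \<le> 1" if "l \<in> {1..D}" for l
    using x that by (auto simp: space_PiM space_U PiE_def Pi_def)
  define y where "y j = (\<Prod>l\<in>{1..d j}. x l)" for j
  have y01: "0 \<le> y j \<and> y j \<le> 1" if j: "j \<in> {1..p}" for j
  proof -
    have "l \<in> {1..d j} \<Longrightarrow> l \<in> {1..D}" for l using dj_le[OF j] by auto
    then show ?thesis unfolding y_def using xl by (auto intro!: prod_nonneg prod_le_1)
  qed
  have zn: "z \<noteq> 0" using z1 by auto
  define iz where "iz = inverse z"
  define w where "w j = complex_of_real (y j) * iz" for j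
  have wl: "norm (w j) < 1" if j: "j \<in> {1..p}" for j
  proof -
    have "norm (w j) = y j / norm z" using y01[OF j] by (simp add: w_def iz_def norm_mult norm_inverse divide_inverse)
    also have "\<dots> \<le> 1 / norm z" using y01[OF j] z1 by (intro divide_right_mono) auto
    also have "\<dots> < 1" using z1 by (simp add: divide_less_eq)
    finally show ?thesis .
  qed
  have P: "((\<lambda>g. \<Prod>j\<in>{1..p}. of_real (cfr (t j) (g j)) * w j ^ g j) has_sum
            (\<Prod>j\<in>{1..p}. 1 / (1 - w j) ^ (t j + 1))) (PiE {1..p} (\<lambda>_. UNIV))"
    by (rule prod_PiE_has_sum(1)[where f = "\<lambda>j n. of_real (cfr (t j) n) * w j ^ n"])
       (use negbin_has_sum wl in auto)
  define Q where "Q j = (\<Prod>l\<in>{d (j - 1) + 1..d j}. complex_of_real (x l ^ r j * (1 - x l) ^ s j))" for j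
  define L where "L = (\<Prod>j\<in>{1..p}. Q j * iz ^ (t j + 1))"
  have P2: "((\<lambda>g. L * (\<Prod>j\<in>{1..p}. of_real (cfr (t j) (g j)) * w j ^ g j)) has_sum
            (L * (\<Prod>j\<in>{1..p}. 1 / (1 - w j) ^ (t j + 1)))) (PiE {1..p} (\<lambda>_. UNIV))"
    by (rule has_sum_cmult_right[OF P])
  have FiEq: "L * (\<Prod>j\<in>{1..p}. 1 / (1 - w j) ^ (t j + 1)) = Fi x"
  proof -
    have "L * (\<Prod>j\<in>{1..p}. 1 / (1 - w j) ^ (t j + 1)) = (\<Prod>j\<in>{1..p}. Q j * iz ^ (t j + 1) * (1 / (1 - w j) ^ (t j + 1)))"
      unfolding L_def by (rule prod.distrib[symmetric])
    also have "\<dots> = (\<Prod>j\<in>{1..p}. Q j / (z - of_real (y j)) ^ (t j + 1))"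
    proof (intro prod.cong refl)
      fix j assume j: "j \<in> {1..p}"
      have w1: "1 - w j \<noteq> 0" using wl[OF j] by (metis eq_iff_diff_eq_0 norm_one order_less_irrefl)
      have "z - of_real (y j) = z * (1 - w j)" using zn by (simp add: w_def iz_def algebra_simps)
      then have "(z - of_real (y j)) ^ (t j + 1) = z ^ (t j + 1) * (1 - w j) ^ (t j + 1)"
        by (simp add: power_mult_distrib)
      then show "Q j * iz ^ (t j + 1) * (1 / (1 - w j) ^ (t j + 1)) = Q j / (z - of_real (y j)) ^ (t j + 1)"
        using zn w1 by (simp add: iz_def power_inverse field_simps)
    qed
    also have "\<dots> = Fi x" by (simp add: Fi_def Q_def y_def)
    finally show ?thesis .
  qed
  have GEq: "G (phi p n) x = L * (\<Prod>j\<in>{1..p}. of_real (cfr (t j) (n j)) * w j ^ n j)"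
    if n: "n \<in> PiE {1..p} (\<lambda>_. UNIV)" for n
  proof -
    let ?k = "phi p n"
    define C where "C = (\<Prod>j\<in>{1..p}. complex_of_real (cfr (t j) (n j)))"
    have C1: "(\<Prod>j\<in>{1..p}. pochhammer (of_nat (?k j - knext p ?k j + 1)) (t j) / fact (t j)) = C"
      unfolding C_def
    proof (intro prod.cong refl)
      fix j assume j: "j \<in> {1..p}"
      show "pochhammer (of_nat (?k j - knext p ?k j + 1)) (t j) / fact (t j) = complex_of_real (cfr (t j) (n j))"
        unfolding phi_diff[OF j] cfr_def of_real_divide of_real_poch by simp
    qed
    have e1: "?k 1 + (sum t {1..p} + p - 1) = sum n {1..p} + (sum t {1..p} + p)"
      unfolding phi_1[OF p1] using p1 by simp
    have pw1: "iz ^ (?k 1 + (sum t {1..p} + p - 1)) = (\<Prod>j\<in>{1..p}. iz ^ n j) * (\<Prod>j\<in>{1..p}. iz ^ (t j + 1))"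
    proof -
      have a: "(\<Prod>j\<in>{1..p}. iz ^ (t j + 1)) = iz ^ (sum t {1..p} + p)"
      proof -
        have "(\<Sum>j\<in>{1..p}. t j + 1) = sum t {1..p} + p" by (subst sum.distrib) simp
        then show ?thesis unfolding power_sum[symmetric] by simp
      qed
      have b: "(\<Prod>j\<in>{1..p}. iz ^ n j) = iz ^ sum n {1..p}"
        unfolding power_sum[symmetric] ..
      show ?thesis unfolding a b e1 by (rule power_add)
    qed
    have Ck: "Ck ?k = (\<Prod>j\<in>{1..p}. iz ^ n j) * (\<Prod>j\<in>{1..p}. iz ^ (t j + 1)) * C"
      unfolding Ck_def C1 pw1[unfolded iz_def] iz_def ..
    have exl: "ex ?k l = r (blk d l) + (\<Sum>i\<in>{blk d l..p}. n i)" if l: "l \<in> {1..D}" for l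
      using blk_in[OF l] by (simp add: ex_def phi_def)
    have "(\<Prod>l\<in>{1..D}. complex_of_real (x l ^ ex ?k l * (1 - x l) ^ s (blk d l)))
        = (\<Prod>l\<in>{1..D}. complex_of_real (x l ^ r (blk d l) * (1 - x l) ^ s (blk d l)))
          * complex_of_real (\<Prod>l\<in>{1..D}. x l ^ (\<Sum>i\<in>{blk d l..p}. n i))"
    proof -
      have "(\<Prod>l\<in>{1..D}. complex_of_real (x l ^ ex ?k l * (1 - x l) ^ s (blk d l)))
         = (\<Prod>l\<in>{1..D}. complex_of_real (x l ^ r (blk d l) * (1 - x l) ^ s (blk d l)) *
              complex_of_real (x l ^ (\<Sum>i\<in>{blk d l..p}. n i)))"
        by (intro prod.cong refl) (simp add: exl power_add mult_ac)
      then show ?thesis by (simp only: prod.distrib of_real_prod)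
    qed
    also have "(\<Prod>l\<in>{1..D}. complex_of_real (x l ^ r (blk d l) * (1 - x l) ^ s (blk d l))) = (\<Prod>j\<in>{1..p}. Q j)"
      unfolding Q_def using prod_blocks[OF dinc d0, of "\<lambda>j l. complex_of_real (x l ^ r j * (1 - x l) ^ s j)"] dp
      by simp
    also have "(\<Prod>l\<in>{1..D}. x l ^ (\<Sum>i\<in>{blk d l..p}. n i)) = (\<Prod>j\<in>{1..p}. y j ^ n j)"
      unfolding y_def using prod_powers[OF dinc d0, of x n] dp by simp
    finally have Pr: "(\<Prod>l\<in>{1..D}. complex_of_real (x l ^ ex ?k l * (1 - x l) ^ s (blk d l)))
        = (\<Prod>j\<in>{1..p}. Q j) * (\<Prod>j\<in>{1..p}. complex_of_real (y j) ^ n j)"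
      by simp
    have "G ?k x = (\<Prod>j\<in>{1..p}. iz ^ n j) * (\<Prod>j\<in>{1..p}. iz ^ (t j + 1)) * C *
                   ((\<Prod>j\<in>{1..p}. Q j) * (\<Prod>j\<in>{1..p}. complex_of_real (y j) ^ n j))"
      unfolding G_def Ck Pr ..
    also have "\<dots> = L * (\<Prod>j\<in>{1..p}. of_real (cfr (t j) (n j)) * w j ^ n j)"
      unfolding L_def C_def w_def by (simp add: prod.distrib power_mult_distrib mult_ac)
    finally show ?thesis .
  qed
  have "((\<lambda>n. G (phi p n) x) has_sum Fi x) (PiE {1..p} (\<lambda>_. UNIV))"
    using P2 unfolding FiEq by (rule has_sum_cong[THEN iffD1, rotated]) (simp add: GEq)
  then show ?thesis
    using has_sum_reindex_bij_betw[OF bij_phi[of p], where f="\<lambda>k. G k x"] by simp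
qed


lemma G_norm_int:
  assumes k: "k \<in> desc_tuples p"
  shows "integral\<^sup>L (PiM {1..D} (\<lambda>_. U)) (\<lambda>x. norm (G k x)) = norm (Kc * Tm p r s t d z k)"
proof -
  define h where "h x = (\<Prod>l\<in>{1..D}. x l ^ ex k l * (1 - x l) ^ s (blk d l))" for x :: "nat \<Rightarrow> real"
  have Gh: "G k x = Ck k * complex_of_real (h x)" for x by (simp add: G_def h_def)
  have hnn: "0 \<le> h x" if "x \<in> space (PiM {1..D} (\<lambda>_. U))" for x
  proof -
    have "0 \<le> x l \<and> x l \<le> 1" if "l \<in> {1..D}" for l
      using \<open>x \<in> space _\<close> that by (auto simp: space_PiM space_U PiE_def Pi_def)
    then show ?thesis unfolding h_def by (intro prod_nonneg) auto
  qed
  have "integral\<^sup>L (PiM {1..D} (\<lambda>_. U)) (\<lambda>x. norm (G k x)) = integral\<^sup>L (PiM {1..D} (\<lambda>_. U)) (\<lambda>x. norm (Ck k) * h x)"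
    by (intro Bochner_Integration.integral_cong refl) (simp add: Gh norm_mult hnn)
  also have "\<dots> = norm (Ck k) * integral\<^sup>L (PiM {1..D} (\<lambda>_. U)) h" by simp
  also have "\<dots> = norm (integral\<^sup>L (PiM {1..D} (\<lambda>_. U)) (G k))"
  proof -
    have "integral\<^sup>L (PiM {1..D} (\<lambda>_. U)) (G k) = Ck k * complex_of_real (integral\<^sup>L (PiM {1..D} (\<lambda>_. U)) h)"
      unfolding Gh by simp
    moreover have "0 \<le> integral\<^sup>L (PiM {1..D} (\<lambda>_. U)) h" by (rule Bochner_Integration.integral_nonneg) (rule hnn)
    ultimately show ?thesis by (simp add: norm_mult)
  qed
  also have "\<dots> = norm (Kc * Tm p r s t d z k)" using int_G(2)[OF k] by simp
  finally show ?thesis .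
qed

lemma main:
  shows "Tm p r s t d z summable_on desc_tuples p"
    and "integral\<^sup>L (PiM {1..D} (\<lambda>_. U)) Fi = Kc * infsum (Tm p r s t d z) (desc_tuples p)"
proof -
  let ?I = "desc_tuples p"
  let ?M = "PiM {1..D} (\<lambda>_. U)"
  let ?T = "Tm p r s t d z"
  obtain e :: "nat \<Rightarrow> (nat \<Rightarrow> nat)" where e: "bij_betw e UNIV ?I"
    using countable_infiniteE'[OF countable_desc infinite_desc[OF p1]] by blast
  have eI: "e i \<in> ?I" for i using e by (auto simp: bij_betw_def)
  have Tn: "(\<lambda>k. norm (?T k)) summable_on ?I" by (rule Tm_summable[OF p1 z1])
  then show Ts: "?T summable_on ?I" by (rule abs_summable_summable)
  have i1: "integrable ?M (G (e i))" for i by (rule int_G(1)[OF eI])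
  have hsx: "((\<lambda>i. G (e i) x) has_sum Fi x) UNIV" if "x \<in> space ?M" for x
    using has_sum_reindex_bij_betw[OF e, where f = "\<lambda>k. G k x"] pw[OF that] by simp
  have i2: "AE x in ?M. summable (\<lambda>i. norm (G (e i) x))"
  proof (rule AE_I2)
    fix x assume x: "x \<in> space ?M"
    have "(\<lambda>i. G (e i) x) summable_on UNIV" using hsx[OF x] by (rule has_sum_imp_summable)
    then have "(\<lambda>i. norm (G (e i) x)) summable_on UNIV"
      by (simp add: summable_on_iff_abs_summable_on_complex)
    then show "summable (\<lambda>i. norm (G (e i) x))"
      by (subst summable_on_UNIV_nonneg_real_iff[symmetric]) auto
  qed
  have "(\<lambda>i. norm (?T (e i))) summable_on UNIV"
    using summable_on_reindex_bij_betw[OF e, where f = "\<lambda>k. norm (?T k)"] Tn by simp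
  then have "(\<lambda>i. norm Kc * norm (?T (e i))) summable_on UNIV" by (rule summable_on_cmult_right)
  then have "summable (\<lambda>i. norm Kc * norm (?T (e i)))"
    by (subst summable_on_UNIV_nonneg_real_iff[symmetric]) auto
  moreover have "(\<integral>x. norm (G (e i) x) \<partial>?M) = norm Kc * norm (?T (e i))" for i
    using G_norm_int[OF eI] by (simp add: norm_mult)
  ultimately have i3: "summable (\<lambda>i. (\<integral>x. norm (G (e i) x) \<partial>?M))" by simp
  have S1: "(\<lambda>i. integral\<^sup>L ?M (G (e i))) sums (\<integral>x. (\<Sum>i. G (e i) x) \<partial>?M)"
    by (rule sums_integral[OF i1 i2 i3])
  have "(\<integral>x. (\<Sum>i. G (e i) x) \<partial>?M) = integral\<^sup>L ?M Fi"
    by (intro Bochner_Integration.integral_cong refl sums_unique[symmetric] has_sum_imp_sums hsx)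
  then have S1': "(\<lambda>i. Kc * ?T (e i)) sums integral\<^sup>L ?M Fi"
    using S1 int_G(2)[OF eI] by simp
  have "(?T has_sum infsum ?T ?I) ?I" using Ts by (rule has_sum_infsum)
  then have "((\<lambda>k. Kc * ?T k) has_sum (Kc * infsum ?T ?I)) ?I" by (rule has_sum_cmult_right)
  then have "((\<lambda>i. Kc * ?T (e i)) has_sum (Kc * infsum ?T ?I)) UNIV"
    using has_sum_reindex_bij_betw[OF e, where f = "\<lambda>k. Kc * ?T k"] by simp
  then have "(\<lambda>i. Kc * ?T (e i)) sums (Kc * infsum ?T ?I)" by (rule has_sum_imp_sums)
  with S1' show "integral\<^sup>L ?M Fi = Kc * infsum ?T ?I" using sums_unique2 by blast
qed

lemma final:
  shows "(\<lambda>k. inverse z ^ k 1 *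
            (\<Prod>j\<in>{1..p}. pochhammer (of_nat (k j - knext p k j + 1)) (t j)
               / pochhammer (of_nat (k j + r j)) (s j + 1) ^ (d j - d (j - 1))))
           summable_on desc_tuples p
       \<and> (LINT x | PiM {1..D} (\<lambda>_. restrict_space lborel {0..1::real}).
            (\<Prod>j\<in>{1..p}.
               (\<Prod>l\<in>{d (j - 1) + 1..d j}. of_real (x l ^ r j * (1 - x l) ^ s j))
               / (z - of_real (\<Prod>l\<in>{1..d j}. x l)) ^ (t j + 1)))
         = inverse z ^ (sum t {1..p} + p - 1)
           * (\<Prod>j\<in>{1..p}. fact (s j) ^ (d j - d (j - 1)) / fact (t j))
           * (\<Sum>\<^sub>\<infinity>k\<in>desc_tuples p. inverse z ^ k 1 *
               (\<Prod>j\<in>{1..p}. pochhammer (of_nat (k j - knext p k j + 1)) (t j)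
                  / pochhammer (of_nat (k j + r j)) (s j + 1) ^ (d j - d (j - 1))))"
proof -
  have T: "Tm p r s t d z = (\<lambda>k. inverse z ^ k 1 *
            (\<Prod>j\<in>{1..p}. pochhammer (of_nat (k j - knext p k j + 1)) (t j)
               / pochhammer (of_nat (k j + r j)) (s j + 1) ^ (d j - d (j - 1))))"
    by (rule ext) (simp add: Tm_def)
  have F: "Fi = (\<lambda>x. (\<Prod>j\<in>{1..p}.
               (\<Prod>l\<in>{d (j - 1) + 1..d j}. of_real (x l ^ r j * (1 - x l) ^ s j))
               / (z - of_real (\<Prod>l\<in>{1..d j}. x l)) ^ (t j + 1)))"
    by (rule ext) (simp add: Fi_def)
  show ?thesis using main unfolding T F Kc_def by simp
qed

end

theorem proposition1:
  fixes D p :: nat and r s t d :: "nat \<Rightarrow> nat" and z :: complex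
  assumes "D \<ge> 1" and "p \<ge> 1"
    and "d 0 = 0" and "\<forall>j\<in>{1..p}. d (j - 1) < d j" and "d p = D"
    and "norm z > 1"
  shows "(\<lambda>k. inverse z ^ k 1 *
            (\<Prod>j\<in>{1..p}. pochhammer (of_nat (k j - knext p k j + 1)) (t j)
               / pochhammer (of_nat (k j + r j)) (s j + 1) ^ (d j - d (j - 1))))
           summable_on desc_tuples p
       \<and> (LINT x | PiM {1..D} (\<lambda>_. restrict_space lborel {0..1::real}).
            (\<Prod>j\<in>{1..p}.
               (\<Prod>l\<in>{d (j - 1) + 1..d j}. of_real (x l ^ r j * (1 - x l) ^ s j))
               / (z - of_real (\<Prod>l\<in>{1..d j}. x l)) ^ (t j + 1)))
         = inverse z ^ (sum t {1..p} + p - 1)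
           * (\<Prod>j\<in>{1..p}. fact (s j) ^ (d j - d (j - 1)) / fact (t j))
           * (\<Sum>\<^sub>\<infinity>k\<in>desc_tuples p. inverse z ^ k 1 *
               (\<Prod>j\<in>{1..p}. pochhammer (of_nat (k j - knext p k j + 1)) (t j)
                  / pochhammer (of_nat (k j + r j)) (s j + 1) ^ (d j - d (j - 1))))"
    by (rule final) (rule assms)+

end
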